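(* Let $N$ be finite, $\mathbf P$ stochastic on $N$, $0<\beta<1$, $\mathbf R\in\mathbb R^N$, $S\subseteq N$ and $\nu\in\mathbb{R}$. The stopping rule $\tau_S$ (continue while in $S$, stop upon first entering $S^c$) is optimal for the problem $\max_\tau\{f_i^\tau-\nu g_i^\tau\}$ over all stopping rules $\tau$, simultaneously for every initial state $i\in N$, if and only if $$\max\{\nu_j^S: j\in S^c\}\le\nu\le\min\{\nu_j^S: j\in S\},$$ with the conventions $\max\emptyset=-\infty$, $\min\emptyset=+\infty$.
   Context: $N$ is a finite state set, $\mathbf{P}=(p_{ij})$ stochastic, $\beta\in(0,1)$, $\mathbf R=(R_j)$; $X(t)$ the Markov chain with matrix $\mathbf P$, $\mathsf E_i$ expectation given $X(0)=i$, $S^c=N\setminus S$. Stopping rules are (possibly randomized) stopping times in $\{0,1,\dots\}\cup\{\infty\}$; $f_i^\tau=\mathsf{E}_i[\sum_{t=0}^{\tau-1}R_{X(t)}\beta^t]$, $g_i^\tau=\mathsf{E}_i[\sum_{t=0}^{\tau-1}\beta^t]$. For $S\subseteq N$, $\tau_S=\min\{t\ge0:X(t)\notin S\}$, $f_i^S=f_i^{\tau_S}$, $g_i^S=g_i^{\tau_S}$, $w_i^S=1+\beta\sum_jp_{ij}g_j^S-\beta g_i^S$ (which is positive), $r_i^S=R_i+\beta\sum_jp_{ij}f_j^S-\beta f_i^S$, and the marginal productivity rate is $\nu_i^S=r_i^S/w_i^S$. *)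

theory Defs
  imports "HOL-Analysis.Analysis"
begin

definition stochastic :: "('n::finite \<Rightarrow> 'n \<Rightarrow> real) \<Rightarrow> bool" where
  "stochastic P \<longleftrightarrow> (\<forall>i j. 0 \<le> P i j) \<and> (\<forall>i. (\<Sum>j\<in>UNIV. P i j) = 1)"

text \<open>A (possibly randomized) stopping rule is given behaviourally by
  sigma h = conditional probability of stopping at time t, given the observed
  history h = [X(0),...,X(t)] and that the rule has not stopped before t.
  sigma = 0 everywhere is tau = infinity.\<close>

definition stopping_rule :: "('n list \<Rightarrow> real) \<Rightarrow> bool" where
  "stopping_rule \<sigma> \<longleftrightarrow> (\<forall>h. 0 \<le> \<sigma> h \<and> \<sigma> h \<le> 1)"

definition paths :: "'n \<Rightarrow> nat \<Rightarrow> 'n list set" where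
  "paths i t = {xs. length xs = Suc t \<and> hd xs = i}"

definition path_prob :: "('n \<Rightarrow> 'n \<Rightarrow> real) \<Rightarrow> 'n list \<Rightarrow> real" where
  "path_prob P xs = (\<Prod>s<length xs - 1. P (xs ! s) (xs ! Suc s))"

text \<open>Probability that the rule has not stopped at any time 0..t along history xs
  (so that tau > t).\<close>
definition survive :: "('n list \<Rightarrow> real) \<Rightarrow> 'n list \<Rightarrow> real" where
  "survive \<sigma> xs = (\<Prod>s<length xs. 1 - \<sigma> (take (Suc s) xs))"

text \<open>E_i [ sum_{t<tau} C(X(t)) beta^t ] = sum_t beta^t E_i[C(X(t)) 1{tau > t}].\<close>
definition disc_val :: "('n::finite \<Rightarrow> 'n \<Rightarrow> real) \<Rightarrow> real \<Rightarrow> ('n \<Rightarrow> real)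
    \<Rightarrow> ('n list \<Rightarrow> real) \<Rightarrow> 'n \<Rightarrow> real" where
  "disc_val P \<beta> C \<sigma> i =
     (\<Sum>t. \<beta> ^ t * (\<Sum>xs\<in>paths i t. path_prob P xs * survive \<sigma> xs * C (last xs)))"

definition fval :: "('n::finite \<Rightarrow> 'n \<Rightarrow> real) \<Rightarrow> real \<Rightarrow> ('n \<Rightarrow> real)
    \<Rightarrow> ('n list \<Rightarrow> real) \<Rightarrow> 'n \<Rightarrow> real" where
  "fval P \<beta> R \<sigma> i = disc_val P \<beta> R \<sigma> i"

definition gval :: "('n::finite \<Rightarrow> 'n \<Rightarrow> real) \<Rightarrow> real
    \<Rightarrow> ('n list \<Rightarrow> real) \<Rightarrow> 'n \<Rightarrow> real" where
  "gval P \<beta> \<sigma> i = disc_val P \<beta> (\<lambda>_. 1) \<sigma> i"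

definition tauS :: "'n set \<Rightarrow> 'n list \<Rightarrow> real" where
  "tauS S h = (if last h \<in> S then 0 else 1)"

definition fS where "fS P \<beta> R S i = fval P \<beta> R (tauS S) i"
definition gS where "gS P \<beta> S i = gval P \<beta> (tauS S) i"

definition wS :: "('n::finite \<Rightarrow> 'n \<Rightarrow> real) \<Rightarrow> real \<Rightarrow> 'n set \<Rightarrow> 'n \<Rightarrow> real" where
  "wS P \<beta> S i = 1 + \<beta> * (\<Sum>j\<in>UNIV. P i j * gS P \<beta> S j) - \<beta> * gS P \<beta> S i"

definition rS :: "('n::finite \<Rightarrow> 'n \<Rightarrow> real) \<Rightarrow> real \<Rightarrow> ('n \<Rightarrow> real) \<Rightarrow> 'n set \<Rightarrow> 'n \<Rightarrow> real" where
  "rS P \<beta> R S i = R i + \<beta> * (\<Sum>j\<in>UNIV. P i j * fS P \<beta> R S j) - \<beta> * fS P \<beta> R S i"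

definition nuS :: "('n::finite \<Rightarrow> 'n \<Rightarrow> real) \<Rightarrow> real \<Rightarrow> ('n \<Rightarrow> real) \<Rightarrow> 'n set \<Rightarrow> 'n \<Rightarrow> real" where
  "nuS P \<beta> R S i = rS P \<beta> R S i / wS P \<beta> S i"

end

theory Submission imports Defs begin

definition trm where
  "trm P C \<sigma> i t = (\<Sum>xs\<in>paths i t. path_prob P xs * survive \<sigma> xs * C (last xs))"

lemma disc_val_trm: "disc_val P \<beta> C \<sigma> i = (\<Sum>t. \<beta>^t * trm P C \<sigma> i t)"
  by (simp add: disc_val_def trm_def)

lemma finite_paths: "finite (paths (i::'n::finite) t)"
proof -
  have "paths i t \<subseteq> {xs. set xs \<subseteq> UNIV \<and> length xs = Suc t}" by (auto simp: paths_def)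
  moreover have "finite {xs::'n list. set xs \<subseteq> UNIV \<and> length xs = Suc t}"
    by (rule finite_lists_length_eq) simp
  ultimately show ?thesis by (rule finite_subset)
qed

lemma paths_0: "paths i 0 = {[i]}"
  by (auto simp: paths_def length_Suc_conv)

lemma paths_nonempty: "xs \<in> paths i t \<Longrightarrow> xs \<noteq> []"
  by (auto simp: paths_def)

lemma paths_snoc: "paths i (Suc t) = (\<lambda>(xs,y). xs @ [y]) ` (paths i t \<times> UNIV)"
proof
  show "(\<lambda>(xs,y). xs @ [y]) ` (paths i t \<times> UNIV) \<subseteq> paths i (Suc t)"
    by (auto simp: paths_def hd_append)
next
  show "paths i (Suc t) \<subseteq> (\<lambda>(xs,y). xs @ [y]) ` (paths i t \<times> UNIV)"
  proof
    fix zs assume z: "zs \<in> paths i (Suc t)"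
    then have ne: "zs \<noteq> []" and len: "length zs = Suc (Suc t)" and h: "hd zs = i"
      by (auto simp: paths_def)
    have eq: "zs = butlast zs @ [last zs]" using ne by simp
    have bne: "butlast zs \<noteq> []" using len by (cases zs) auto
    have "hd (butlast zs) = i" using h eq bne by (metis hd_append2)
    then have "butlast zs \<in> paths i t" using len by (auto simp: paths_def)
    then show "zs \<in> (\<lambda>(xs,y). xs @ [y]) ` (paths i t \<times> UNIV)"
      using eq by (intro image_eqI[where x="(butlast zs, last zs)"]) auto
  qed
qed

lemma sum_paths_snoc:
  "(\<Sum>zs\<in>paths (i::'n::finite) (Suc t). W zs) = (\<Sum>xs\<in>paths i t. \<Sum>y\<in>UNIV. W (xs @ [y]))"
proof -
  have inj: "inj_on (\<lambda>(xs,y::'n). xs @ [y]) (paths i t \<times> UNIV)"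
    by (auto simp: inj_on_def)
  have "(\<Sum>zs\<in>paths i (Suc t). W zs) = (\<Sum>p\<in>paths i t \<times> UNIV. W ((\<lambda>(xs,y). xs @ [y]) p))"
    unfolding paths_snoc by (rule sum.reindex[OF inj, unfolded comp_def])
  also have "\<dots> = (\<Sum>xs\<in>paths i t. \<Sum>y\<in>UNIV. W (xs @ [y]))"
    by (simp add: sum.cartesian_product split_def)
  finally show ?thesis .
qed

lemma paths_cons: "paths i (Suc t) = (\<lambda>(y,ys). i # ys) ` (SIGMA y:UNIV. paths y t)"
proof
  show "(\<lambda>(y,ys). i # ys) ` (SIGMA y:UNIV. paths y t) \<subseteq> paths i (Suc t)"
    by (auto simp: paths_def)
next
  show "paths i (Suc t) \<subseteq> (\<lambda>(y,ys). i # ys) ` (SIGMA y:UNIV. paths y t)"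
  proof
    fix zs assume z: "zs \<in> paths i (Suc t)"
    then obtain ys where zs: "zs = i # ys" and len: "length ys = Suc t"
      by (cases zs) (auto simp: paths_def)
    then have "ys \<in> paths (hd ys) t" by (auto simp: paths_def)
    then show "zs \<in> (\<lambda>(y,ys). i # ys) ` (SIGMA y:UNIV. paths y t)"
      using zs by (intro image_eqI[where x="(hd ys, ys)"]) auto
  qed
qed

lemma sum_paths_cons:
  "(\<Sum>zs\<in>paths (i::'n::finite) (Suc t). W zs) = (\<Sum>y\<in>UNIV. \<Sum>ys\<in>paths y t. W (i # ys))"
proof -
  have inj: "inj_on (\<lambda>(y,ys). i # ys) (SIGMA y:(UNIV::'n set). paths y t)"
    by (auto simp: inj_on_def paths_def)
  have "(\<Sum>zs\<in>paths i (Suc t). W zs) = (\<Sum>p\<in>(SIGMA y:(UNIV::'n set). paths y t). W ((\<lambda>(y,ys). i # ys) p))"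
    unfolding paths_cons by (rule sum.reindex[OF inj, unfolded comp_def])
  also have "\<dots> = (\<Sum>y\<in>UNIV. \<Sum>ys\<in>paths y t. W (i # ys))"
    by (subst sum.Sigma) (auto simp: finite_paths split_def)
  finally show ?thesis .
qed

lemma pp_cons: "ys \<noteq> [] \<Longrightarrow> path_prob P (i # ys) = P i (hd ys) * path_prob P ys"
proof -
  assume ne: "ys \<noteq> []"
  then obtain n where n: "length ys = Suc n" by (cases ys) auto
  have "path_prob P (i # ys) = (\<Prod>s<Suc n. P ((i#ys) ! s) ((i#ys) ! Suc s))"
    by (simp add: path_prob_def n)
  also have "\<dots> = P i (ys ! 0) * (\<Prod>s<n. P (ys ! s) (ys ! Suc s))"
    by (subst prod.lessThan_Suc_shift) simp
  also have "\<dots> = P i (hd ys) * path_prob P ys"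
    using ne n by (simp add: path_prob_def hd_conv_nth)
  finally show ?thesis .
qed

lemma pp_snoc: "xs \<noteq> [] \<Longrightarrow> path_prob P (xs @ [y]) = path_prob P xs * P (last xs) y"
proof -
  assume ne: "xs \<noteq> []"
  then obtain n where n: "length xs = Suc n" by (cases xs) auto
  have "path_prob P (xs @ [y]) = (\<Prod>s<Suc n. P ((xs@[y]) ! s) ((xs@[y]) ! Suc s))"
    by (simp add: path_prob_def n)
  also have "\<dots> = (\<Prod>s<n. P ((xs@[y]) ! s) ((xs@[y]) ! Suc s)) * P ((xs@[y]) ! n) ((xs@[y]) ! Suc n)"
    by (rule prod.lessThan_Suc)
  also have "(\<Prod>s<n. P ((xs@[y]) ! s) ((xs@[y]) ! Suc s)) = (\<Prod>s<n. P (xs ! s) (xs ! Suc s))"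
    by (rule prod.cong) (auto simp: nth_append n)
  also have "P ((xs@[y]) ! n) ((xs@[y]) ! Suc n) = P (last xs) y"
    using n ne by (simp add: nth_append last_conv_nth)
  finally show ?thesis by (simp add: path_prob_def n)
qed

lemma pp_single: "path_prob P [i] = 1"
  by (simp add: path_prob_def)

lemma survive_snoc: "survive \<sigma> (xs @ [y]) = survive \<sigma> xs * (1 - \<sigma> (xs @ [y]))"
proof -
  have "survive \<sigma> (xs @ [y]) = (\<Prod>s<Suc (length xs). 1 - \<sigma> (take (Suc s) (xs @ [y])))"
    by (simp add: survive_def)
  also have "\<dots> = (\<Prod>s<length xs. 1 - \<sigma> (take (Suc s) (xs @ [y]))) * (1 - \<sigma> (xs @ [y]))"
    by (simp add: prod.lessThan_Suc)
  also have "(\<Prod>s<length xs. 1 - \<sigma> (take (Suc s) (xs @ [y]))) = survive \<sigma> xs"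
    unfolding survive_def by (rule prod.cong) auto
  finally show ?thesis .
qed

lemma survive_cons:
  assumes "\<And>zs. zs \<noteq> [] \<Longrightarrow> \<sigma> (i # zs) = \<sigma>' zs"
  shows "survive \<sigma> (i # ys) = (1 - \<sigma> [i]) * survive \<sigma>' ys"
proof -
  have "survive \<sigma> (i # ys) = (\<Prod>s<Suc (length ys). 1 - \<sigma> (take (Suc s) (i # ys)))"
    by (simp add: survive_def)
  also have "\<dots> = (1 - \<sigma> [i]) * (\<Prod>s<length ys. 1 - \<sigma> (take (Suc (Suc s)) (i # ys)))"
    by (subst prod.lessThan_Suc_shift) simp
  also have "(\<Prod>s<length ys. 1 - \<sigma> (take (Suc (Suc s)) (i # ys))) = survive \<sigma>' ys"
    unfolding survive_def
  proof (rule prod.cong[OF refl])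
    fix s assume "s \<in> {..<length ys}"
    then have ne: "take (Suc s) ys \<noteq> []" by auto
    have "take (Suc (Suc s)) (i # ys) = i # take (Suc s) ys" by simp
    then show "1 - \<sigma> (take (Suc (Suc s)) (i # ys)) = 1 - \<sigma>' (take (Suc s) ys)"
      using assms[OF ne] by simp
  qed
  finally show ?thesis .
qed

lemma survive_single: "survive \<sigma> [i] = 1 - \<sigma> [i]"
  by (simp add: survive_def)

lemma survive_bounds:
  assumes "stopping_rule \<sigma>" shows "0 \<le> survive \<sigma> xs" "survive \<sigma> xs \<le> 1"
  using assms unfolding survive_def stopping_rule_def
  by (auto intro!: prod_nonneg prod_le_1)

lemma pp_nonneg: "stochastic P \<Longrightarrow> 0 \<le> path_prob P xs"
  unfolding path_prob_def stochastic_def by (auto intro!: prod_nonneg)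

lemma pp_sum: "stochastic P \<Longrightarrow> (\<Sum>xs\<in>paths (i::'n::finite) t. path_prob P xs) = 1"
proof (induction t arbitrary: i)
  case 0 then show ?case by (simp add: paths_0 pp_single)
next
  case (Suc t)
  have "(\<Sum>xs\<in>paths i (Suc t). path_prob P xs) = (\<Sum>y\<in>UNIV. \<Sum>ys\<in>paths y t. path_prob P (i # ys))"
    by (rule sum_paths_cons)
  also have "\<dots> = (\<Sum>y\<in>UNIV. P i y * (\<Sum>ys\<in>paths y t. path_prob P ys))"
    by (intro sum.cong refl) (auto simp: pp_cons paths_nonempty sum_distrib_left paths_def)
  also have "\<dots> = 1" using Suc by (simp add: stochastic_def)
  finally show ?case .
qed

lemma trm_bound:
  assumes P: "stochastic P" and s: "stopping_rule \<sigma>"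
  shows "\<bar>trm P C \<sigma> (i::'n::finite) t\<bar> \<le> (\<Sum>x\<in>UNIV. \<bar>C x\<bar>)"
proof -
  let ?M = "\<Sum>x\<in>UNIV. \<bar>C x\<bar>"
  have "\<bar>trm P C \<sigma> i t\<bar> \<le> (\<Sum>xs\<in>paths i t. \<bar>path_prob P xs * survive \<sigma> xs * C (last xs)\<bar>)"
    unfolding trm_def by (rule sum_abs)
  also have "\<dots> \<le> (\<Sum>xs\<in>paths i t. path_prob P xs * ?M)"
  proof (rule sum_mono)
    fix xs
    have a: "0 \<le> path_prob P xs" by (rule pp_nonneg[OF P])
    have b: "0 \<le> survive \<sigma> xs" "survive \<sigma> xs \<le> 1" by (rule survive_bounds[OF s])+
    have c: "\<bar>C (last xs)\<bar> \<le> ?M" by (rule member_le_sum) auto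
    have "\<bar>path_prob P xs * survive \<sigma> xs * C (last xs)\<bar> = path_prob P xs * (survive \<sigma> xs * \<bar>C (last xs)\<bar>)"
      using a b by (simp add: abs_mult)
    also have "\<dots> \<le> path_prob P xs * ?M"
      using a b c by (intro mult_left_mono) (meson abs_ge_zero mult_left_le_one_le order_trans)
    finally show "\<bar>path_prob P xs * survive \<sigma> xs * C (last xs)\<bar> \<le> path_prob P xs * ?M" .
  qed
  also have "\<dots> = ?M" using pp_sum[OF P] by (simp add: sum_distrib_right[symmetric])
  finally show ?thesis .
qed

lemma summable_trm:
  assumes P: "stochastic P" and s: "stopping_rule \<sigma>" and b: "0 \<le> \<beta>" "\<beta> < 1"
  shows "summable (\<lambda>t. \<beta>^t * trm P C \<sigma> (i::'n::finite) t)"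
proof (rule summable_comparison_test')
  show "summable (\<lambda>t. (\<Sum>x\<in>UNIV. \<bar>C x\<bar>) * \<beta>^t)"
    using b by (intro summable_mult summable_geometric) auto
  fix t
  show "norm (\<beta>^t * trm P C \<sigma> i t) \<le> (\<Sum>x\<in>UNIV. \<bar>C x\<bar>) * \<beta>^t"
    using trm_bound[OF P s, of C i t] b by (simp add: abs_mult mult.commute mult_left_mono)
qed

lemma trm_0: "trm P C \<sigma> i 0 = (1 - \<sigma> [i]) * C i"
  by (simp add: trm_def paths_0 pp_single survive_single)

lemma trm_Suc:
  assumes h: "\<And>zs. zs \<noteq> [] \<Longrightarrow> \<sigma> (i # zs) = \<sigma>' zs"
  shows "trm P C \<sigma> (i::'n::finite) (Suc t) = (1 - \<sigma> [i]) * (\<Sum>y\<in>UNIV. P i y * trm P C \<sigma>' y t)"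
proof -
  have "trm P C \<sigma> i (Suc t) = (\<Sum>y\<in>UNIV. \<Sum>ys\<in>paths y t. path_prob P (i#ys) * survive \<sigma> (i#ys) * C (last (i#ys)))"
    unfolding trm_def by (rule sum_paths_cons)
  also have "\<dots> = (\<Sum>y\<in>UNIV. (1 - \<sigma> [i]) * (P i y * trm P C \<sigma>' y t))"
    unfolding trm_def sum_distrib_left
  proof (intro sum.cong refl)
    fix y :: 'n and ys assume ys: "ys \<in> paths y t"
    then have ne: "ys \<noteq> []" and hd: "hd ys = y" by (auto simp: paths_def)
    show "path_prob P (i#ys) * survive \<sigma> (i#ys) * C (last (i#ys))
       = (1 - \<sigma> [i]) * (P i y * (path_prob P ys * survive \<sigma>' ys * C (last ys)))"
      using ne hd by (simp add: pp_cons survive_cons[where \<sigma>=\<sigma> and \<sigma>'=\<sigma>' and i=i, OF h])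
  qed
  also have "\<dots> = (1 - \<sigma> [i]) * (\<Sum>y\<in>UNIV. P i y * trm P C \<sigma>' y t)"
    by (simp add: sum_distrib_left)
  finally show ?thesis .
qed

lemma disc_val_step:
  assumes P: "stochastic P" and s: "stopping_rule \<sigma>'" and b: "0 \<le> \<beta>" "\<beta> < 1"
    and h: "\<And>zs. zs \<noteq> [] \<Longrightarrow> \<sigma> (i # zs) = \<sigma>' zs"
  shows "disc_val P \<beta> C \<sigma> (i::'n::finite)
     = (1 - \<sigma> [i]) * (C i + \<beta> * (\<Sum>y\<in>UNIV. P i y * disc_val P \<beta> C \<sigma>' y))"
proof -
  let ?g = "\<lambda>y t. \<beta>^t * trm P C \<sigma>' y t"
  have sg: "\<And>y. summable (?g y)" by (rule summable_trm[OF P s b])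
  define f where "f t = \<beta>^t * trm P C \<sigma> i t" for t
  have fS: "f (Suc t) = (\<beta> * (1 - \<sigma> [i])) * (\<Sum>y\<in>UNIV. P i y * ?g y t)" for t
    by (simp add: f_def trm_Suc[where \<sigma>=\<sigma> and \<sigma>'=\<sigma>' and i=i, OF h] sum_distrib_left algebra_simps)
  have sum1: "(\<lambda>t. \<Sum>y\<in>UNIV. P i y * ?g y t) sums (\<Sum>y\<in>UNIV. P i y * disc_val P \<beta> C \<sigma>' y)"
    by (intro sums_sum sums_mult summable_sums[OF sg, unfolded disc_val_trm[symmetric]])
  have "(\<lambda>t. f (Suc t)) sums ((\<beta> * (1 - \<sigma> [i])) * (\<Sum>y\<in>UNIV. P i y * disc_val P \<beta> C \<sigma>' y))"
    unfolding fS by (rule sums_mult[OF sum1])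
  then have "f sums ((\<beta> * (1 - \<sigma> [i])) * (\<Sum>y\<in>UNIV. P i y * disc_val P \<beta> C \<sigma>' y) + f 0)"
    by (subst sums_Suc_iff[symmetric])
  then have "disc_val P \<beta> C \<sigma> i = (\<beta> * (1 - \<sigma> [i])) * (\<Sum>y\<in>UNIV. P i y * disc_val P \<beta> C \<sigma>' y) + f 0"
    unfolding disc_val_trm f_def[symmetric] by (rule sums_unique[symmetric])
  then show ?thesis by (simp add: f_def trm_0 algebra_simps)
qed

lemma disc_val_lin:
  assumes P: "stochastic P" and s: "stopping_rule \<sigma>" and b: "0 \<le> \<beta>" "\<beta> < 1"
  shows "disc_val P \<beta> (\<lambda>x. A x - \<nu> * B x) \<sigma> (i::'n::finite) = disc_val P \<beta> A \<sigma> i - \<nu> * disc_val P \<beta> B \<sigma> i"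
proof -
  have t: "\<beta>^t * trm P (\<lambda>x. A x - \<nu> * B x) \<sigma> i t = \<beta>^t * trm P A \<sigma> i t - \<nu> * (\<beta>^t * trm P B \<sigma> i t)" for t
    by (simp add: trm_def sum_subtractf sum_distrib_left algebra_simps)
  have "(\<lambda>t. \<beta>^t * trm P A \<sigma> i t - \<nu> * (\<beta>^t * trm P B \<sigma> i t)) sums (disc_val P \<beta> A \<sigma> i - \<nu> * disc_val P \<beta> B \<sigma> i)"
    unfolding disc_val_trm
    by (intro sums_diff sums_mult summable_sums summable_trm[OF P s b])
  then show ?thesis unfolding disc_val_trm t by (rule sums_unique[symmetric])
qed

lemma disc_val_nonneg:
  assumes P: "stochastic P" and s: "stopping_rule \<sigma>" and b: "0 \<le> \<beta>" "\<beta> < 1"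
    and C: "\<And>x. 0 \<le> C x"
  shows "0 \<le> disc_val P \<beta> C \<sigma> (i::'n::finite)"
  unfolding disc_val_trm
  by (intro suminf_nonneg summable_trm[OF P s b] mult_nonneg_nonneg zero_le_power b(1))
     (auto simp: trm_def intro!: sum_nonneg mult_nonneg_nonneg pp_nonneg[OF P] survive_bounds[OF s] C)

lemma disc_val_le:
  assumes P: "stochastic P" and s: "stopping_rule \<sigma>" and b: "0 \<le> \<beta>" "\<beta> < 1"
    and V0: "\<And>x. 0 \<le> V x"
    and VB: "\<And>x. C x + \<beta> * (\<Sum>y\<in>UNIV. P x y * V y) \<le> V x"
  shows "disc_val P \<beta> C \<sigma> (i::'n::finite) \<le> V i"
proof -
  define A where "A t = \<beta>^t * (\<Sum>xs\<in>paths i t. path_prob P xs * survive \<sigma> (butlast xs) * V (last xs))" for t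
  have A0: "A 0 = V i" by (simp add: A_def paths_0 pp_single survive_def)
  have Anonneg: "0 \<le> A t" for t
    unfolding A_def using b
    by (intro mult_nonneg_nonneg zero_le_power sum_nonneg)
       (auto intro!: mult_nonneg_nonneg pp_nonneg[OF P] survive_bounds[OF s] V0)
  have step: "\<beta>^t * trm P C \<sigma> i t + A (Suc t) \<le> A t" for t
  proof -
    let ?PV = "\<lambda>x. \<Sum>y\<in>UNIV. P x y * V y"
    have "A (Suc t) = \<beta>^Suc t * (\<Sum>xs\<in>paths i t. \<Sum>y\<in>UNIV. path_prob P (xs@[y]) * survive \<sigma> (butlast (xs@[y])) * V (last (xs@[y])))"
      unfolding A_def by (simp only: sum_paths_snoc)
    also have "\<dots> = \<beta>^t * (\<Sum>xs\<in>paths i t. path_prob P xs * survive \<sigma> xs * (\<beta> * ?PV (last xs)))"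
      unfolding sum_distrib_left
      by (intro sum.cong refl) (auto simp: pp_snoc paths_nonempty sum_distrib_left algebra_simps)
    finally have AS: "A (Suc t) = \<beta>^t * (\<Sum>xs\<in>paths i t. path_prob P xs * survive \<sigma> xs * (\<beta> * ?PV (last xs)))" .
    have "\<beta>^t * trm P C \<sigma> i t + A (Suc t) = \<beta>^t * (\<Sum>xs\<in>paths i t. path_prob P xs * survive \<sigma> xs * (C (last xs) + \<beta> * ?PV (last xs)))"
      unfolding AS trm_def sum.distrib distrib_left by (simp add: mult_ac)
    also have "\<dots> \<le> A t"
      unfolding A_def
    proof (intro mult_left_mono sum_mono)
      fix xs assume xs: "xs \<in> paths i t"
      then have ne: "xs \<noteq> []" by (rule paths_nonempty)
      have sv: "survive \<sigma> xs = survive \<sigma> (butlast xs) * (1 - \<sigma> xs)"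
        using survive_snoc[of \<sigma> "butlast xs" "last xs"] ne by simp
      let ?q = "C (last xs) + \<beta> * ?PV (last xs)"
      let ?v = "V (last xs)"
      have q: "?q \<le> ?v" by (rule VB)
      have v: "0 \<le> ?v" by (rule V0)
      have sg: "0 \<le> \<sigma> xs" "\<sigma> xs \<le> 1" using s by (auto simp: stopping_rule_def)
      have "(1 - \<sigma> xs) * ?q \<le> (1 - \<sigma> xs) * ?v" using q sg by (intro mult_left_mono) auto
      also have "\<dots> \<le> ?v" using sg v by (simp add: mult_left_le_one_le)
      finally have k: "(1 - \<sigma> xs) * ?q \<le> ?v" .
      have "survive \<sigma> (butlast xs) * ((1 - \<sigma> xs) * ?q) \<le> survive \<sigma> (butlast xs) * ?v"
        using k survive_bounds[OF s] by (intro mult_left_mono) auto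
      then have "survive \<sigma> xs * ?q \<le> survive \<sigma> (butlast xs) * ?v" by (simp only: sv mult.assoc)
      then have "path_prob P xs * (survive \<sigma> xs * ?q) \<le> path_prob P xs * (survive \<sigma> (butlast xs) * ?v)"
        by (intro mult_left_mono pp_nonneg[OF P])
      then show "path_prob P xs * survive \<sigma> xs * ?q \<le> path_prob P xs * survive \<sigma> (butlast xs) * ?v"
        by (simp add: mult.assoc)
    qed (use b in simp)
    finally show ?thesis .
  qed
  have part: "(\<Sum>t<T. \<beta>^t * trm P C \<sigma> i t) + A T \<le> V i" for T
  proof (induction T)
    case 0 then show ?case using A0 by simp
  next
    case (Suc T) then show ?case using step[of T] by simp
  qed
  have "(\<Sum>t. \<beta>^t * trm P C \<sigma> i t) \<le> V i"
  proof (rule suminf_le_const)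
    show "summable (\<lambda>t. \<beta>^t * trm P C \<sigma> i t)" by (rule summable_trm[OF P s b])
    fix T show "(\<Sum>t<T. \<beta>^t * trm P C \<sigma> i t) \<le> V i"
      using part[of T] Anonneg[of T] by linarith
  qed
  then show ?thesis by (simp add: disc_val_trm)
qed

theorem proposition4:
  fixes P :: "'n::finite \<Rightarrow> 'n \<Rightarrow> real" and \<beta> :: real and R :: "'n \<Rightarrow> real"
    and S :: "'n set" and \<nu> :: real
  assumes "stochastic P" and "0 < \<beta>" and "\<beta> < 1"
  shows "(\<forall>i. \<forall>\<sigma>. stopping_rule \<sigma> \<longrightarrow>
            fval P \<beta> R \<sigma> i - \<nu> * gval P \<beta> \<sigma> i
              \<le> fval P \<beta> R (tauS S) i - \<nu> * gval P \<beta> (tauS S) i)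
         \<longleftrightarrow> ((\<forall>j\<in>-S. nuS P \<beta> R S j \<le> \<nu>) \<and> (\<forall>j\<in>S. \<nu> \<le> nuS P \<beta> R S j))"
proof -
  note Pst = assms(1)
  have b: "0 \<le> \<beta>" "\<beta> < 1" using assms by auto
  define f where "f = fS P \<beta> R S"
  define g where "g = gS P \<beta> S"
  define \<rho> :: "'n list \<Rightarrow> real" where "\<rho> h = (if length h \<le> 1 then 0 else tauS S h)" for h
  define one :: "'n list \<Rightarrow> real" where "one h = 1" for h
  have sr_tau: "stopping_rule (tauS S)" by (simp add: stopping_rule_def tauS_def)
  have sr_rho: "stopping_rule \<rho>" by (simp add: stopping_rule_def tauS_def \<rho>_def)
  have sr_one: "stopping_rule one" by (simp add: stopping_rule_def one_def)
  have h_tau: "tauS S (x # zs) = tauS S zs" if "zs \<noteq> []" for x zs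
    using that by (simp add: tauS_def)
  have h_rho: "\<rho> (x # zs) = tauS S zs" if "zs \<noteq> []" for x zs
    using that by (cases zs) (simp_all add: \<rho>_def tauS_def)
  have step_tau: "disc_val P \<beta> C (tauS S) x = (if x \<in> S then C x + \<beta> * (\<Sum>y\<in>UNIV. P x y * disc_val P \<beta> C (tauS S) y) else 0)" for C x
    using disc_val_step[OF Pst sr_tau b, of "tauS S" x C] h_tau by (simp add: tauS_def)
  have step_rho: "disc_val P \<beta> C \<rho> x = C x + \<beta> * (\<Sum>y\<in>UNIV. P x y * disc_val P \<beta> C (tauS S) y)" for C x
    using disc_val_step[OF Pst sr_tau b, of \<rho> x C] h_rho by (simp add: \<rho>_def)
  have step_one: "disc_val P \<beta> C one x = 0" for C x
    using disc_val_step[OF Pst sr_one b, of one x C] by (simp add: one_def)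
  have fS_eq: "f x = (if x \<in> S then R x + \<beta> * (\<Sum>y\<in>UNIV. P x y * f y) else 0)" for x
    unfolding f_def fS_def fval_def by (rule step_tau)
  have gS_eq: "g x = (if x \<in> S then 1 + \<beta> * (\<Sum>y\<in>UNIV. P x y * g y) else 0)" for x
    unfolding g_def gS_def gval_def by (rule step_tau)
  have g_nn: "0 \<le> g x" for x
    unfolding g_def gS_def gval_def by (rule disc_val_nonneg[OF Pst sr_tau b]) simp
  have Pg_nn: "0 \<le> (\<Sum>y\<in>UNIV. P x y * g y)" for x
    using Pst g_nn by (auto simp: stochastic_def intro!: sum_nonneg)
  have g_S: "1 \<le> g x" if "x \<in> S" for x
    using gS_eq[of x] that Pg_nn[of x] b by simp
  have w_out: "wS P \<beta> S x = 1 + \<beta> * (\<Sum>y\<in>UNIV. P x y * g y)" if "x \<notin> S" for x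
    using gS_eq[of x] that by (simp add: wS_def g_def)
  have r_out: "rS P \<beta> R S x = R x + \<beta> * (\<Sum>y\<in>UNIV. P x y * f y)" if "x \<notin> S" for x
    using fS_eq[of x] that by (simp add: rS_def f_def)
  have w_out_pos: "0 < wS P \<beta> S x" if "x \<notin> S" for x
    using w_out[OF that] Pg_nn[of x] b by (simp add: add_pos_nonneg)
  have nu_in: "nuS P \<beta> R S x = f x / g x" if "x \<in> S" for x
  proof -
    have "rS P \<beta> R S x = (1 - \<beta>) * f x"
      using fS_eq[of x] that by (simp add: rS_def f_def algebra_simps)
    moreover have "wS P \<beta> S x = (1 - \<beta>) * g x"
      using gS_eq[of x] that by (simp add: wS_def g_def algebra_simps)
    ultimately show ?thesis using b by (simp add: nuS_def)
  qed
  have nu_in_iff: "\<nu> \<le> nuS P \<beta> R S x \<longleftrightarrow> \<nu> * g x \<le> f x" if "x \<in> S" for x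
    using nu_in[OF that] g_S[OF that] by (simp add: pos_le_divide_eq)
  have nu_out_iff: "nuS P \<beta> R S x \<le> \<nu> \<longleftrightarrow> R x + \<beta> * (\<Sum>y\<in>UNIV. P x y * f y) - \<nu> * (1 + \<beta> * (\<Sum>y\<in>UNIV. P x y * g y)) \<le> 0" if "x \<notin> S" for x
    using w_out_pos[OF that] w_out[OF that] r_out[OF that]
    by (simp add: nuS_def pos_divide_le_eq)
  have lin: "fval P \<beta> R \<sigma> x - \<nu> * gval P \<beta> \<sigma> x = disc_val P \<beta> (\<lambda>x. R x - \<nu> * 1) \<sigma> x"
    if "stopping_rule \<sigma>" for \<sigma> x
    unfolding fval_def gval_def by (rule disc_val_lin[OF Pst that b, symmetric])
  have tauval: "fval P \<beta> R (tauS S) x - \<nu> * gval P \<beta> (tauS S) x = f x - \<nu> * g x" for x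
    by (simp add: f_def g_def fS_def gS_def)
  show ?thesis
  proof
    assume H: "\<forall>i. \<forall>\<sigma>. stopping_rule \<sigma> \<longrightarrow>
            fval P \<beta> R \<sigma> i - \<nu> * gval P \<beta> \<sigma> i
              \<le> fval P \<beta> R (tauS S) i - \<nu> * gval P \<beta> (tauS S) i"
    show "(\<forall>j\<in>-S. nuS P \<beta> R S j \<le> \<nu>) \<and> (\<forall>j\<in>S. \<nu> \<le> nuS P \<beta> R S j)"
    proof (intro conjI ballI)
      fix j assume j: "j \<in> -S"
      have "fval P \<beta> R \<rho> j - \<nu> * gval P \<beta> \<rho> j \<le> f j - \<nu> * g j"
        using H sr_rho tauval by metis
      then show "nuS P \<beta> R S j \<le> \<nu>"
        using j fS_eq[of j] gS_eq[of j] nu_out_iff[of j]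
        by (simp add: fval_def gval_def step_rho f_def g_def fS_def gS_def)
    next
      fix j assume j: "j \<in> S"
      have "fval P \<beta> R one j - \<nu> * gval P \<beta> one j \<le> f j - \<nu> * g j"
        using H sr_one tauval by metis
      then show "\<nu> \<le> nuS P \<beta> R S j"
        using j nu_in_iff[of j] by (simp add: fval_def gval_def step_one)
    qed
  next
    assume C: "(\<forall>j\<in>-S. nuS P \<beta> R S j \<le> \<nu>) \<and> (\<forall>j\<in>S. \<nu> \<le> nuS P \<beta> R S j)"
    define V where "V x = f x - \<nu> * g x" for x
    have PV: "(\<Sum>y\<in>UNIV. P x y * V y) = (\<Sum>y\<in>UNIV. P x y * f y) - \<nu> * (\<Sum>y\<in>UNIV. P x y * g y)" for x
      by (simp add: V_def sum_subtractf sum_distrib_left algebra_simps)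
    have V0: "0 \<le> V x" for x
    proof (cases "x \<in> S")
      case True then show ?thesis using C nu_in_iff[of x] by (simp add: V_def)
    next
      case False then show ?thesis using fS_eq[of x] gS_eq[of x] by (simp add: V_def)
    qed
    have VB: "(R x - \<nu> * 1) + \<beta> * (\<Sum>y\<in>UNIV. P x y * V y) \<le> V x" for x
    proof (cases "x \<in> S")
      case True
      have "V x = R x - \<nu> + \<beta> * ((\<Sum>y\<in>UNIV. P x y * f y) - \<nu> * (\<Sum>y\<in>UNIV. P x y * g y))"
        using True fS_eq[of x] gS_eq[of x] by (simp add: V_def right_diff_distrib distrib_left)
      then show ?thesis unfolding PV by simp
    next
      case False
      then have "R x + \<beta> * (\<Sum>y\<in>UNIV. P x y * f y) - \<nu> * (1 + \<beta> * (\<Sum>y\<in>UNIV. P x y * g y)) \<le> 0"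
        using C nu_out_iff[of x] by auto
      moreover have "V x = 0" using False fS_eq[of x] gS_eq[of x] by (simp add: V_def)
      ultimately show ?thesis unfolding PV by (simp add: right_diff_distrib distrib_left mult_ac)
    qed
    show "\<forall>i. \<forall>\<sigma>. stopping_rule \<sigma> \<longrightarrow>
            fval P \<beta> R \<sigma> i - \<nu> * gval P \<beta> \<sigma> i
              \<le> fval P \<beta> R (tauS S) i - \<nu> * gval P \<beta> (tauS S) i"
    proof (intro allI impI)
      fix i and \<sigma> :: "'n list \<Rightarrow> real" assume s: "stopping_rule \<sigma>"
      have "disc_val P \<beta> (\<lambda>x. R x - \<nu> * 1) \<sigma> i \<le> V i"
        by (rule disc_val_le[OF Pst s b V0 VB])
      then show "fval P \<beta> R \<sigma> i - \<nu> * gval P \<beta> \<sigma> i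
              \<le> fval P \<beta> R (tauS S) i - \<nu> * gval P \<beta> (tauS S) i"
        using lin[OF s] tauval by (simp add: V_def)
    qed
  qed
qed

end
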